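(* If $m_1-m_2\le2$, then for every $\beta\in(0,1)^4$ the set $\mathrm{QPH}^s_\beta(E)$ of $\beta$-stable points of $\mathrm{QPH}(E)$ is a nonempty Zariski open subset containing $\mathrm{QPH}_{\mathbb C^*}(E)$. If $m_1-m_2\ge4$, then $\mathrm{QPH}^s_\beta(E)=\emptyset$ for every $\beta\in[0,1)^4$.
   Context: Fix $z_1\in\mathbb{CP}^1\setminus\{0,1,\infty\}$, set $z_2=0$, $z_3=1$, $z_4=\infty$, $D=z_1+\dots+z_4$. Let $E\to\mathbb{CP}^1$ be a rank 2 holomorphic bundle of degree $d$, $E\cong\mathcal O(m_1)\oplus\mathcal O(m_2)$, $m_1\ge m_2$. $\mathrm{QPH}(E)$ is the space of tuples $(F_1,\dots,F_4,\Phi)$ where $F_i\subset E|_{z_i}$ are lines and $\Phi\in H^0(\mathrm{End}(E)\otimes K_{\mathbb{CP}^1}(D))$ has nilpotent residues $\mathrm{Res}_{z_i}\Phi$ with $F_i\subset\ker\mathrm{Res}_{z_i}\Phi$. $\mathrm{QPH}_{\mathbb C^*}(E)$ is the subset where $\det\Phi\ne0$. For $\beta\in[0,1)^4$ and $I\subset\{1,2,3,4\}$ put $\beta_I=\sum_{i\in I}\beta_i-\sum_{j\notin I}\beta_j$; for a line subbundle $L\subset E$ put $I_L=\{i:L|_{z_i}=F_i\}$. The point is $\beta$-stable if for every line subbundle $L$ with $\Phi(L)\subset L\otimes K_{\mathbb{CP}^1}(D)$ one has $\beta_{I_L}<d-2\deg L$. *)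

theory Defs
  imports Complex_Main "HOL-Computational_Algebra.Polynomial"
begin

text \<open>Points: index 1 = z1, 2 = 0, 3 = 1, 4 = infinity.
E = O(m1) + O(m2) with standard frames e1,e2 on C and frames z^m1 e1, z^m2 e2 near infinity.
K(D) is trivialised on C by omega = dz/(z(z-1)(z-z1)); a Higgs field is
Phi = A(z) omega with A a 2x2 matrix of polynomials, deg A_ab \<le> m_a - m_b + 2.
Fibres of E are identified with C^2 via these frames; a line F_i is the span of a
nonzero vector.\<close>

record qdat =
  qF1 :: "complex \<times> complex"
  qF2 :: "complex \<times> complex"
  qF3 :: "complex \<times> complex"
  qF4 :: "complex \<times> complex"
  qA11 :: "complex poly"
  qA12 :: "complex poly"
  qA21 :: "complex poly"
  qA22 :: "complex poly"

definition Fv :: "qdat \<Rightarrow> nat \<Rightarrow> complex \<times> complex" where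
  "Fv x i = (if i = 1 then qF1 x else if i = 2 then qF2 x else if i = 3 then qF3 x
             else if i = 4 then qF4 x else (0, 0))"

definition Aent :: "qdat \<Rightarrow> nat \<Rightarrow> nat \<Rightarrow> complex poly" where
  "Aent x a b = (if a = 1 \<and> b = 1 then qA11 x else if a = 1 \<and> b = 2 then qA12 x
                 else if a = 2 \<and> b = 1 then qA21 x else if a = 2 \<and> b = 2 then qA22 x else 0)"

definition mdeg :: "int \<Rightarrow> int \<Rightarrow> nat \<Rightarrow> int" where
  "mdeg m1 m2 a = (if a = 1 then m1 else m2)"

definition polyle :: "complex poly \<Rightarrow> int \<Rightarrow> bool" where
  "polyle p n \<longleftrightarrow> p = 0 \<or> int (degree p) \<le> n"

definition topco :: "complex poly \<Rightarrow> int \<Rightarrow> complex" where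
  "topco p n = (if n < 0 then 0 else coeff p (nat n))"

definition pt :: "complex \<Rightarrow> nat \<Rightarrow> complex" where
  "pt z1 i = (if i = 1 then z1 else if i = 2 then 0 else 1)"

type_synonym mat2 = "nat \<Rightarrow> nat \<Rightarrow> complex"

definition mmul :: "mat2 \<Rightarrow> mat2 \<Rightarrow> mat2" where
  "mmul M N = (\<lambda>i j. \<Sum>k\<in>{1,2}. M i k * N k j)"

primrec mpow :: "mat2 \<Rightarrow> nat \<Rightarrow> mat2" where
  "mpow M 0 = (\<lambda>i j. if i = j then 1 else 0)"
| "mpow M (Suc n) = mmul M (mpow M n)"

definition nilpotent2 :: "mat2 \<Rightarrow> bool" where
  "nilpotent2 M \<longleftrightarrow> (\<exists>k. \<forall>i\<in>{1,2}. \<forall>j\<in>{1,2}. mpow M k i j = 0)"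

definition mapply :: "mat2 \<Rightarrow> complex \<times> complex \<Rightarrow> complex \<times> complex" where
  "mapply M v = (M 1 1 * fst v + M 1 2 * snd v, M 2 1 * fst v + M 2 2 * snd v)"

definition line_of :: "complex \<times> complex \<Rightarrow> (complex \<times> complex) set" where
  "line_of v = {(c * fst v, c * snd v) | c. True}"

definition resid :: "complex \<Rightarrow> int \<Rightarrow> int \<Rightarrow> qdat \<Rightarrow> nat \<Rightarrow> mat2" where
  "resid z1 m1 m2 x i =
     (if i = 4 then (\<lambda>a b. - topco (Aent x a b) (mdeg m1 m2 a - mdeg m1 m2 b + 2))
      else (\<lambda>a b. poly (Aent x a b) (pt z1 i) /
                   (\<Prod>q\<in>{1,2,3} - {i}. (pt z1 i - pt z1 q))))"

definition QPH :: "complex \<Rightarrow> int \<Rightarrow> int \<Rightarrow> qdat set" where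
  "QPH z1 m1 m2 = {x.
     (\<forall>i\<in>{1..4}. Fv x i \<noteq> (0, 0)) \<and>
     (\<forall>a\<in>{1,2}. \<forall>b\<in>{1,2}. polyle (Aent x a b) (mdeg m1 m2 a - mdeg m1 m2 b + 2)) \<and>
     (\<forall>i\<in>{1..4}. nilpotent2 (resid z1 m1 m2 x i) \<and>
        (\<forall>w\<in>line_of (Fv x i). mapply (resid z1 m1 m2 x i) w = (0, 0)))}"

definition QPH_Cstar :: "complex \<Rightarrow> int \<Rightarrow> int \<Rightarrow> qdat set" where
  "QPH_Cstar z1 m1 m2 = {x \<in> QPH z1 m1 m2. qA11 x * qA22 x - qA12 x * qA21 x \<noteq> 0}"

text \<open>Line subbundle L = O(k) of E given by (s1,s2), s_i a section of O(m_i - k),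
without common zeros on CP^1.\<close>
definition lsub :: "int \<Rightarrow> int \<Rightarrow> int \<Rightarrow> complex poly \<Rightarrow> complex poly \<Rightarrow> bool" where
  "lsub m1 m2 k s1 s2 \<longleftrightarrow> polyle s1 (m1 - k) \<and> polyle s2 (m2 - k) \<and>
     (\<forall>z. \<not> (poly s1 z = 0 \<and> poly s2 z = 0)) \<and>
     \<not> (topco s1 (m1 - k) = 0 \<and> topco s2 (m2 - k) = 0)"

definition Lfib :: "complex \<Rightarrow> int \<Rightarrow> int \<Rightarrow> int \<Rightarrow> complex poly \<Rightarrow> complex poly \<Rightarrow> nat \<Rightarrow> complex \<times> complex" where
  "Lfib z1 m1 m2 k s1 s2 i = (if i = 4 then (topco s1 (m1 - k), topco s2 (m2 - k))
                               else (poly s1 (pt z1 i), poly s2 (pt z1 i)))"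

definition Phi_inv :: "qdat \<Rightarrow> complex poly \<Rightarrow> complex poly \<Rightarrow> bool" where
  "Phi_inv x s1 s2 \<longleftrightarrow> (\<forall>z. mapply (\<lambda>a b. poly (Aent x a b) z) (poly s1 z, poly s2 z)
                                \<in> line_of (poly s1 z, poly s2 z))"

definition I_L :: "complex \<Rightarrow> int \<Rightarrow> int \<Rightarrow> qdat \<Rightarrow> int \<Rightarrow> complex poly \<Rightarrow> complex poly \<Rightarrow> nat set" where
  "I_L z1 m1 m2 x k s1 s2 = {i\<in>{1..4}. line_of (Lfib z1 m1 m2 k s1 s2 i) = line_of (Fv x i)}"

definition betaI :: "(nat \<Rightarrow> real) \<Rightarrow> nat set \<Rightarrow> real" where
  "betaI \<beta> I = (\<Sum>i\<in>I. \<beta> i) - (\<Sum>j\<in>{1..4} - I. \<beta> j)"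

definition beta_stable :: "complex \<Rightarrow> int \<Rightarrow> int \<Rightarrow> (nat \<Rightarrow> real) \<Rightarrow> qdat \<Rightarrow> bool" where
  "beta_stable z1 m1 m2 \<beta> x \<longleftrightarrow>
     (\<forall>k s1 s2. lsub m1 m2 k s1 s2 \<and> Phi_inv x s1 s2 \<longrightarrow>
        betaI \<beta> (I_L z1 m1 m2 x k s1 s2) < real_of_int (m1 + m2 - 2 * k))"

definition QPH_stable :: "complex \<Rightarrow> int \<Rightarrow> int \<Rightarrow> (nat \<Rightarrow> real) \<Rightarrow> qdat set" where
  "QPH_stable z1 m1 m2 \<beta> = {x \<in> QPH z1 m1 m2. beta_stable z1 m1 m2 \<beta> x}"

text \<open>Polynomial functions in the coordinates (vectors spanning F_i, coefficients of A).\<close>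
inductive_set zpoly :: "(qdat \<Rightarrow> complex) set" where
  zconst: "(\<lambda>_. c) \<in> zpoly"
| zF1: "(\<lambda>x. fst (Fv x i)) \<in> zpoly"
| zF2: "(\<lambda>x. snd (Fv x i)) \<in> zpoly"
| zA: "(\<lambda>x. coeff (Aent x a b) n) \<in> zpoly"
| zadd: "f \<in> zpoly \<Longrightarrow> g \<in> zpoly \<Longrightarrow> (\<lambda>x. f x + g x) \<in> zpoly"
| zmul: "f \<in> zpoly \<Longrightarrow> g \<in> zpoly \<Longrightarrow> (\<lambda>x. f x * g x) \<in> zpoly"

definition zariski_open_in :: "qdat set \<Rightarrow> qdat set \<Rightarrow> bool" where
  "zariski_open_in X S \<longleftrightarrow> S \<subseteq> X \<and>
     (\<exists>Fs \<subseteq> zpoly. X - S = {x \<in> X. \<forall>f\<in>Fs. f x = 0})"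

end

theory Submission
  imports Defs "Jordan_Normal_Form.Determinant" "HOL-Computational_Algebra.Fundamental_Theorem_Algebra"
    "HOL-Computational_Algebra.Field_as_Ring" "HOL-Computational_Algebra.Polynomial_Factorial"
begin


lemma zpoly_sum: "finite S \<Longrightarrow> (\<And>i. i \<in> S \<Longrightarrow> (\<lambda>y. f i y) \<in> zpoly) \<Longrightarrow> (\<lambda>y. \<Sum>i\<in>S. f i y) \<in> zpoly"
  by (induction S rule: finite_induct) (auto intro: zpoly.intros)

lemma zpoly_prod: "finite S \<Longrightarrow> (\<And>i. i \<in> S \<Longrightarrow> (\<lambda>y. f i y) \<in> zpoly) \<Longrightarrow> (\<lambda>y. \<Prod>i\<in>S. f i y) \<in> zpoly"
  by (induction S rule: finite_induct) (auto intro: zpoly.intros)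

lemma kernel_det:
  fixes e :: "nat \<Rightarrow> nat \<Rightarrow> qdat \<Rightarrow> complex"
  assumes ez: "\<And>r b. r < R \<Longrightarrow> b < N \<Longrightarrow> (\<lambda>y. e r b y) \<in> zpoly"
  and inj: "\<And>c. (\<forall>r<R. (\<Sum>b<N. e r b x * c b) = 0) \<Longrightarrow> \<forall>b<N. c b = 0"
  shows "\<exists>f\<in>zpoly. f x \<noteq> 0 \<and> (\<forall>y c. (\<exists>b<N. c b \<noteq> 0) \<and> (\<forall>r<R. (\<Sum>b<N. e r b y * c b) = 0) \<longrightarrow> f y = 0)"
proof -
  define G where "G y = mat N N (\<lambda>(a,b). \<Sum>r<R. cnj (e r a x) * e r b y)" for y
  define f where "f y = det (G y)" for y
  have Gc: "G y \<in> carrier_mat N N" for y by (simp add: G_def)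
  have feq: "f y = (\<Sum>p\<in>{p. p permutes {0..<N}}. signof p * (\<Prod>i = 0..<N. (\<Sum>r<R. cnj (e r i x) * e r (p i) y)))" for y
    unfolding f_def det_def'[OF Gc]
  proof (intro sum.cong refl arg_cong2[where f="(*)"] prod.cong)
    fix p i assume p: "p \<in> {p. p permutes {0..<N}}" and i: "i \<in> {0..<N}"
    have "p i < N" using p i permutes_in_image by fastforce
    then show "G y $$ (i, p i) = (\<Sum>r<R. cnj (e r i x) * e r (p i) y)" using i by (simp add: G_def)
  qed
  have fz: "f \<in> zpoly"
  proof -
    have "(\<lambda>y. \<Sum>p\<in>{p. p permutes {0..<N}}. signof p * (\<Prod>i = 0..<N. (\<Sum>r<R. cnj (e r i x) * e r (p i) y))) \<in> zpoly"
    proof (rule zpoly_sum)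
      show "finite {p. p permutes {0..<N}}" by (simp add: finite_permutations)
      fix p assume p: "p \<in> {p. p permutes {0..<N}}"
      show "(\<lambda>y. signof p * (\<Prod>i = 0..<N. (\<Sum>r<R. cnj (e r i x) * e r (p i) y))) \<in> zpoly"
      proof (rule zmul[OF zconst])
        show "(\<lambda>y. \<Prod>i = 0..<N. (\<Sum>r<R. cnj (e r i x) * e r (p i) y)) \<in> zpoly"
        proof (rule zpoly_prod, simp)
          fix i assume i: "i \<in> {0..<N}"
          have "p i < N" using p i permutes_in_image by fastforce
          then show "(\<lambda>y. \<Sum>r<R. cnj (e r i x) * e r (p i) y) \<in> zpoly"
            by (intro zpoly_sum zmul[OF zconst] ez) auto
        qed
      qed
    qed
    moreover have "f = (\<lambda>y. \<Sum>p\<in>{p. p permutes {0..<N}}. signof p * (\<Prod>i = 0..<N. (\<Sum>r<R. cnj (e r i x) * e r (p i) y)))"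
      using feq by (rule ext)
    ultimately show ?thesis by metis
  qed
  have mv: "(G y *\<^sub>v v) $ a = (\<Sum>b<N. (\<Sum>r<R. cnj (e r a x) * e r b y) * v $ b)"
    if "a < N" "v \<in> carrier_vec N" for y v a
    using that by (simp add: G_def scalar_prod_def atLeast0LessThan)
  have fx: "f x \<noteq> 0"
  proof
    assume "f x = 0"
    then have "det (G x) = 0" by (simp add: f_def)
    then obtain v where v: "v \<in> carrier_vec N" "v \<noteq> 0\<^sub>v N" "G x *\<^sub>v v = 0\<^sub>v N"
      unfolding det_0_iff_vec_prod_zero[OF Gc] by blast
    define c where "c b = v $ b" for b
    define w where "w r = (\<Sum>b<N. e r b x * c b)" for r
    have Gv0: "(\<Sum>b<N. (\<Sum>r<R. cnj (e r a x) * e r b x) * c b) = 0" if "a < N" for a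
      using mv[OF that v(1), of x] v(3) that by (simp add: c_def)
    have cw: "cnj (w r) = (\<Sum>a<N. cnj (e r a x) * cnj (c a))" for r
      by (simp add: w_def)
    have eq1: "(\<Sum>r<R. cnj (e r a x) * w r) = (\<Sum>b<N. (\<Sum>r<R. cnj (e r a x) * e r b x) * c b)" for a
    proof -
      have "(\<Sum>r<R. cnj (e r a x) * w r) = (\<Sum>r<R. \<Sum>b<N. cnj (e r a x) * e r b x * c b)"
        unfolding w_def sum_distrib_left by (simp add: mult.assoc)
      also have "\<dots> = (\<Sum>b<N. \<Sum>r<R. cnj (e r a x) * e r b x * c b)" by (rule sum.swap)
      also have "\<dots> = (\<Sum>b<N. (\<Sum>r<R. cnj (e r a x) * e r b x) * c b)" by (simp add: sum_distrib_right)
      finally show ?thesis .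
    qed
    have "(\<Sum>r<R. cnj (w r) * w r) = (\<Sum>r<R. \<Sum>a<N. cnj (c a) * (cnj (e r a x) * w r))"
      unfolding cw sum_distrib_right by (simp add: mult_ac)
    also have "\<dots> = (\<Sum>a<N. \<Sum>r<R. cnj (c a) * (cnj (e r a x) * w r))" by (rule sum.swap)
    also have "\<dots> = (\<Sum>a<N. cnj (c a) * (\<Sum>b<N. (\<Sum>r<R. cnj (e r a x) * e r b x) * c b))"
      by (simp add: sum_distrib_left[symmetric] eq1)
    also have "\<dots> = 0" using Gv0 by simp
    finally have s0: "(\<Sum>r<R. cnj (w r) * w r) = 0" .
    have "(\<Sum>r<R. cnj (w r) * w r) = complex_of_real (\<Sum>r<R. (cmod (w r))^2)"
      unfolding of_real_sum by (rule sum.cong[OF refl]) (subst complex_norm_square, simp add: mult.commute)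
    with s0 have "complex_of_real (\<Sum>r<R. (cmod (w r))^2) = 0" by simp
    then have "(\<Sum>r<R. (cmod (w r))^2) = 0" by (simp only: of_real_eq_0_iff)
    then have "\<forall>r<R. (cmod (w r))^2 = 0" by (subst (asm) sum_nonneg_eq_0_iff) auto
    then have "\<forall>r<R. w r = 0" by simp
    then have "\<forall>b<N. c b = 0" using inj[of c] unfolding w_def by blast
    then have "v = 0\<^sub>v N" using v(1) by (intro eq_vecI) (auto simp: c_def)
    with v(2) show False by simp
  qed
  have fy: "f y = 0" if c: "\<exists>b<N. c b \<noteq> 0" "\<forall>r<R. (\<Sum>b<N. e r b y * c b) = 0" for y c
  proof -
    define v where "v = vec N c"
    have vc: "v \<in> carrier_vec N" by (simp add: v_def)
    have "v \<noteq> 0\<^sub>v N" using c(1) by (auto simp: v_def vec_eq_iff)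
    moreover have "G y *\<^sub>v v = 0\<^sub>v N"
    proof (intro eq_vecI)
      fix a assume "a < dim_vec (0\<^sub>v N :: complex vec)"
      then have a: "a < N" by simp
      have "(G y *\<^sub>v v) $ a = (\<Sum>b<N. (\<Sum>r<R. cnj (e r a x) * e r b y) * c b)"
        using mv[OF a vc] by (simp add: v_def)
      also have "\<dots> = (\<Sum>r<R. cnj (e r a x) * (\<Sum>b<N. e r b y * c b))"
      proof -
        have "(\<Sum>b<N. (\<Sum>r<R. cnj (e r a x) * e r b y) * c b) = (\<Sum>b<N. \<Sum>r<R. cnj (e r a x) * (e r b y * c b))"
          by (simp add: sum_distrib_right mult.assoc)
        also have "\<dots> = (\<Sum>r<R. \<Sum>b<N. cnj (e r a x) * (e r b y * c b))" by (rule sum.swap)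
        finally show ?thesis by (simp add: sum_distrib_left)
      qed
      also have "\<dots> = 0" using c(2) by simp
      finally show "(G y *\<^sub>v v) $ a = 0\<^sub>v N $ a" using a by simp
    qed (simp add: G_def)
    ultimately have "det (G y) = 0" unfolding det_0_iff_vec_prod_zero[OF Gc] using vc by blast
    then show ?thesis by (simp add: f_def)
  qed
  show ?thesis using fz fx fy by blast
qed



definition par :: "complex \<times> complex \<Rightarrow> complex \<times> complex \<Rightarrow> bool" where
  "par u v \<longleftrightarrow> snd v * fst u = fst v * snd u"

lemma line_of_par: "line_of u = line_of v \<Longrightarrow> par u v"
proof -
  assume h: "line_of u = line_of v"
  have "u \<in> line_of u" unfolding line_of_def by (rule CollectI, rule exI[of _ 1]) simp
  then have "u \<in> line_of v" using h by simp
  then obtain c where "u = (c * fst v, c * snd v)" unfolding line_of_def by blast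
  then show ?thesis unfolding par_def by (simp add: mult_ac)
qed

lemma line_of_scale: "c \<noteq> 0 \<Longrightarrow> line_of (c * fst v, c * snd v) = line_of v"
proof
  show "line_of (c * fst v, c * snd v) \<subseteq> line_of v"
  proof
    fix w assume "w \<in> line_of (c * fst v, c * snd v)"
    then obtain d where "w = (d * (c * fst v), d * (c * snd v))" unfolding line_of_def by auto
    then have "w = ((d * c) * fst v, (d * c) * snd v)" by (simp add: mult_ac)
    then show "w \<in> line_of v" unfolding line_of_def by blast
  qed
next
  assume c: "c \<noteq> 0"
  show "line_of v \<subseteq> line_of (c * fst v, c * snd v)"
  proof
    fix w assume "w \<in> line_of v"
    then obtain d where "w = (d * fst v, d * snd v)" unfolding line_of_def by auto
    then have "w = ((d / c) * (c * fst v), (d / c) * (c * snd v))" using c by simp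
    then show "w \<in> line_of (c * fst v, c * snd v)" unfolding line_of_def
      by (intro CollectI exI[of _ "d / c"]) simp
  qed
qed

lemma par_line: assumes "u \<noteq> (0,0)" "v \<noteq> (0,0)" "par u v" shows "line_of u = line_of v"
proof -
  obtain u1 u2 v1 v2 where uv: "u = (u1,u2)" "v = (v1,v2)" by (cases u, cases v) auto
  have p: "v2 * u1 = v1 * u2" using assms(3) uv by (simp add: par_def)
  have "\<exists>c. c \<noteq> 0 \<and> u = (c * fst v, c * snd v)"
  proof (cases "v1 = 0")
    case True
    then have "v2 \<noteq> 0" using assms(2) uv by auto
    then have "u1 = 0" using p True by simp
    show ?thesis using \<open>v2 \<noteq> 0\<close> \<open>u1 = 0\<close> True assms(1) uv
      by (intro exI[of _ "u2 / v2"]) auto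
  next
    case False
    have "u2 = u1 / v1 * v2" using p False by (simp add: field_simps)
    moreover have "u1 \<noteq> 0" using assms(1) uv \<open>u2 = u1 / v1 * v2\<close> by auto
    ultimately show ?thesis using False uv by (intro exI[of _ "u1 / v1"]) auto
  qed
  then obtain c where "c \<noteq> 0" "u = (c * fst v, c * snd v)" by blast
  then show ?thesis using line_of_scale by simp
qed

lemma par_scale: "par u v \<Longrightarrow> par (c * fst u, c * snd u) v"
  unfolding par_def by (simp add: mult_ac)

lemma mapply_mmul: "mapply (mmul M N) v = mapply M (mapply N v)"
  by (simp add: mapply_def mmul_def distrib_left distrib_right mult.assoc)

lemma mapply_mpow: "mapply M v = (\<mu> * fst v, \<mu> * snd v) \<Longrightarrow> mapply (mpow M k) v = (\<mu>^k * fst v, \<mu>^k * snd v)"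
proof (induction k)
  case 0 then show ?case by (simp add: mapply_def)
next
  case (Suc k)
  have sc: "mapply M (a * fst v, a * snd v) = (a * fst (mapply M v), a * snd (mapply M v))" for a
    by (simp add: mapply_def algebra_simps)
  show ?case using Suc by (simp add: mapply_mmul sc)
qed

lemma nilpotent_eig: assumes "nilpotent2 M" "mapply M v = (\<mu> * fst v, \<mu> * snd v)" "v \<noteq> (0,0)"
  shows "\<mu> = 0"
proof -
  obtain k where k: "\<forall>i\<in>{1,2}. \<forall>j\<in>{1,2}. mpow M k i j = 0" using assms(1) nilpotent2_def by blast
  have "mapply (mpow M k) v = (0,0)" using k by (simp add: mapply_def)
  then have "\<mu>^k * fst v = 0 \<and> \<mu>^k * snd v = 0" using mapply_mpow[OF assms(2), of k] by simp
  then show ?thesis using assms(3) by (cases v) auto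
qed

definition Au :: "qdat \<Rightarrow> complex poly \<Rightarrow> complex poly \<Rightarrow> complex poly \<times> complex poly" where
  "Au x s1 s2 = (qA11 x * s1 + qA12 x * s2, qA21 x * s1 + qA22 x * s2)"

lemma polyle_mult: "polyle p a \<Longrightarrow> polyle q b \<Longrightarrow> polyle (p * q) (a + b)"
  unfolding polyle_def
proof (elim disjE, simp_all)
  assume "int (degree p) \<le> a" "int (degree q) \<le> b"
  moreover have "degree (p * q) \<le> degree p + degree q" by (rule degree_mult_le)
  ultimately show "p = 0 \<or> q = 0 \<or> int (degree (p * q)) \<le> a + b" by linarith
qed

lemma polyle_add: "polyle p a \<Longrightarrow> polyle q a \<Longrightarrow> polyle (p + q) a"
  unfolding polyle_def
proof (elim disjE, simp_all)
  assume "int (degree p) \<le> a" "int (degree q) \<le> a"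
  moreover have "degree (p + q) \<le> max (degree p) (degree q)" by (rule degree_add_le_max)
  ultimately show "p + q = 0 \<or> int (degree (p + q)) \<le> a" by linarith
qed

lemma polyle_mono: "polyle p a \<Longrightarrow> a \<le> b \<Longrightarrow> polyle p b"
  unfolding polyle_def by auto

lemma polyle_neg: "polyle p a \<Longrightarrow> a < 0 \<Longrightarrow> p = 0"
  unfolding polyle_def by auto

lemma polyle_0[simp]: "polyle 0 a" by (simp add: polyle_def)

lemma QPH_deg:
  assumes "x \<in> QPH z1 m1 m2"
  shows "polyle (qA11 x) 2" "polyle (qA22 x) 2" "polyle (qA12 x) (m1 - m2 + 2)" "polyle (qA21 x) (m2 - m1 + 2)"
  using assms by (auto simp: QPH_def Aent_def mdeg_def)

lemma QPH_F: "x \<in> QPH z1 m1 m2 \<Longrightarrow> i \<in> {1..4} \<Longrightarrow> Fv x i \<noteq> (0,0)"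
  by (auto simp: QPH_def)

lemma QPH_res: "x \<in> QPH z1 m1 m2 \<Longrightarrow> i \<in> {1..4} \<Longrightarrow> nilpotent2 (resid z1 m1 m2 x i)"
  by (auto simp: QPH_def)

lemma pt_distinct: "z1 \<noteq> 0 \<Longrightarrow> z1 \<noteq> 1 \<Longrightarrow> i \<in> {1,2,3} \<Longrightarrow> q \<in> {1,2,3} \<Longrightarrow> i \<noteq> q \<Longrightarrow> pt z1 i \<noteq> pt z1 q"
  by (auto simp: pt_def)

lemma resid_fin:
  assumes "z1 \<noteq> 0" "z1 \<noteq> 1" "i \<in> {1,2,3}"
  shows "\<exists>K. K \<noteq> 0 \<and> (\<forall>v. mapply (resid z1 m1 m2 x i) v = (K * fst (mapply (\<lambda>a b. poly (Aent x a b) (pt z1 i)) v), K * snd (mapply (\<lambda>a b. poly (Aent x a b) (pt z1 i)) v)))"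
proof -
  define P where "P = (\<Prod>q\<in>{1,2,3} - {i}. (pt z1 i - pt z1 q))"
  have "P \<noteq> 0" unfolding P_def
    using pt_distinct[OF assms(1,2) assms(3)] by (subst prod_zero_iff) auto
  moreover have "i \<noteq> 4" using assms(3) by auto
  ultimately show ?thesis
    by (intro exI[of _ "1 / P"]) (simp add: resid_def P_def mapply_def field_simps)
qed

lemma nocommon_gcd: assumes "\<forall>z. \<not> (poly s1 z = 0 \<and> poly s2 z = 0)"
  shows "gcd s1 s2 = (1 :: complex poly)"
proof -
  let ?g = "gcd s1 s2"
  have g0: "?g \<noteq> 0" using assms by auto
  have "degree ?g = 0"
  proof (rule ccontr)
    assume "degree ?g \<noteq> 0"
    then have "\<not> constant (poly ?g)" by (simp add: constant_degree)
    then obtain z where z: "poly ?g z = 0" using fundamental_theorem_of_algebra by blast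
    have "?g dvd s1" "?g dvd s2" by auto
    then have "poly s1 z = 0" "poly s2 z = 0" using z by (metis dvdE mult_zero_left poly_mult)+
    then show False using assms by blast
  qed
  then have "is_unit ?g" using g0 is_unit_iff_degree by blast
  then show ?thesis using is_unit_gcd_iff by blast
qed



lemma deg_bound: fixes l s :: "complex poly"
  assumes "polyle (l * s) (n + 2)" "topco s n \<noteq> 0" shows "l = 0 \<or> degree l \<le> 2"
proof (cases "l = 0")
  case False
  then have l: "l \<noteq> 0" .
  have n: "n \<ge> 0" and c: "coeff s (nat n) \<noteq> 0" using assms(2) by (auto simp: topco_def split: if_splits)
  then have s: "s \<noteq> 0" by auto
  have "nat n \<le> degree s" using c le_degree by blast
  moreover have "degree (l * s) = degree l + degree s" using l s by (rule degree_mult_eq)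
  moreover have "l * s \<noteq> 0" using l s by simp
  ultimately show ?thesis using assms(1) n unfolding polyle_def by linarith
qed simp

lemma three_roots: fixes l :: "complex poly"
  assumes "z1 \<noteq> 0" "z1 \<noteq> 1" "poly l z1 = 0" "poly l 0 = 0" "poly l 1 = 0" "l = 0 \<or> degree l \<le> 2"
  shows "l = 0"
proof (rule ccontr)
  assume l: "l \<noteq> 0"
  have "{z1, 0, 1} \<subseteq> {z. poly l z = 0}" using assms by auto
  then have "card {z1, 0, 1} \<le> card {z. poly l z = 0}"
    using poly_roots_finite[OF l] by (intro card_mono) auto
  also have "\<dots> \<le> degree l" using card_poly_roots_bound[OF l] .
  finally show False using assms l by auto
qed

lemma Au_poly: "mapply (\<lambda>a b. poly (Aent x a b) z) (poly s1 z, poly s2 z) = (poly (fst (Au x s1 s2)) z, poly (snd (Au x s1 s2)) z)"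
  by (simp add: mapply_def Aent_def Au_def)

lemma lsub_nz: "lsub m1 m2 k s1 s2 \<Longrightarrow> (poly s1 z, poly s2 z) \<noteq> (0,0)"
  by (auto simp: lsub_def)

lemma phi_inv_zero:
  assumes x: "x \<in> QPH z1 m1 m2" and z: "z1 \<noteq> 0" "z1 \<noteq> 1"
  and L: "lsub m1 m2 k s1 s2" and P: "Phi_inv x s1 s2"
  shows "Au x s1 s2 = (0,0)"
proof -
  obtain u1 u2 where Au: "Au x s1 s2 = (u1, u2)" by (cases "Au x s1 s2") auto
  have u1: "u1 = qA11 x * s1 + qA12 x * s2" and u2: "u2 = qA21 x * s1 + qA22 x * s2"
    using Au by (auto simp: Au_def)
  have nz: "\<forall>z. \<not> (poly s1 z = 0 \<and> poly s2 z = 0)" using L by (simp add: lsub_def)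
  have pw: "poly u1 z * poly s2 z = poly u2 z * poly s1 z" for z
  proof -
    have "(poly u1 z, poly u2 z) \<in> line_of (poly s1 z, poly s2 z)"
      using P Au_poly[of x z s1 s2] Au unfolding Phi_inv_def by (metis fst_conv snd_conv)
    then obtain c where "(poly u1 z, poly u2 z) = (c * poly s1 z, c * poly s2 z)"
      unfolding line_of_def by auto
    then show ?thesis by (simp add: mult_ac)
  qed
  have eq: "u1 * s2 = u2 * s1"
    using pw by (subst poly_eq_poly_eq_iff[symmetric]) (simp add: fun_eq_iff)
  have g: "gcd s1 s2 = 1" using nocommon_gcd[OF nz] .
  obtain a b where ab: "a * s1 + b * s2 = 1"
    using bezout_coefficients_fst_snd[of s1 s2] g by metis
  define l where "l = a * u1 + b * u2"
  have l1: "l * s1 = u1"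
  proof -
    have "l * s1 - u1 * (a * s1 + b * s2) = b * (u2 * s1 - u1 * s2)" by (simp add: l_def algebra_simps)
    then show ?thesis using eq ab by simp
  qed
  have l2: "l * s2 = u2"
  proof -
    have "l * s2 - u2 * (a * s1 + b * s2) = a * (u1 * s2 - u2 * s1)" by (simp add: l_def algebra_simps)
    then show ?thesis using eq ab by simp
  qed
  have root: "poly l (pt z1 i) = 0" if i: "i \<in> {1,2,3}" for i
  proof -
    obtain K where K: "K \<noteq> 0" "\<forall>v. mapply (resid z1 m1 m2 x i) v = (K * fst (mapply (\<lambda>a b. poly (Aent x a b) (pt z1 i)) v), K * snd (mapply (\<lambda>a b. poly (Aent x a b) (pt z1 i)) v))"
      using resid_fin[OF z i] by blast
    let ?v = "(poly s1 (pt z1 i), poly s2 (pt z1 i))"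
    have "mapply (resid z1 m1 m2 x i) ?v = ((K * poly l (pt z1 i)) * fst ?v, (K * poly l (pt z1 i)) * snd ?v)"
      using K(2) Au_poly[of x "pt z1 i" s1 s2] Au l1[symmetric] l2[symmetric] by (simp add: mult_ac)
    moreover have i4: "i \<in> {1..4}" using i by auto
    ultimately have "K * poly l (pt z1 i) = 0"
      by (intro nilpotent_eig[OF QPH_res[OF x i4] _ lsub_nz[OF L]])
    then show ?thesis using K(1) by simp
  qed
  have degs: "polyle (qA11 x) 2" "polyle (qA22 x) 2" "polyle (qA12 x) (m1 - m2 + 2)" "polyle (qA21 x) (m2 - m1 + 2)"
    using QPH_deg[OF x] by auto
  have ps: "polyle s1 (m1 - k)" "polyle s2 (m2 - k)" and tc: "topco s1 (m1 - k) \<noteq> 0 \<or> topco s2 (m2 - k) \<noteq> 0"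
    using L by (auto simp: lsub_def)
  have pu1: "polyle u1 ((m1 - k) + 2)" unfolding u1
    by (rule polyle_add; rule polyle_mono[OF polyle_mult]) (use degs ps in auto)
  have pu2: "polyle u2 ((m2 - k) + 2)" unfolding u2
    by (rule polyle_add; rule polyle_mono[OF polyle_mult]) (use degs ps in auto)
  have "l = 0 \<or> degree l \<le> 2"
    using tc deg_bound[of l s1 "m1 - k"] deg_bound[of l s2 "m2 - k"] pu1 pu2 l1 l2 by auto
  then have "l = 0" using three_roots[OF z] root[of 1] root[of 2] root[of 3] by (simp add: pt_def)
  then show ?thesis using Au l1 l2 by auto
qed



lemma par_unscale: "c \<noteq> 0 \<Longrightarrow> par (c * a, c * b) v \<Longrightarrow> par (a, b) v"
  unfolding par_def by (metis fst_conv snd_conv mult.left_commute mult_left_cancel)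

lemma Au_zero_inv: "Au x s1 s2 = (0,0) \<Longrightarrow> Phi_inv x s1 s2"
  unfolding Phi_inv_def
proof
  fix z assume "Au x s1 s2 = (0,0)"
  then have "mapply (\<lambda>a b. poly (Aent x a b) z) (poly s1 z, poly s2 z) = (0 * poly s1 z, 0 * poly s2 z)"
    using Au_poly[of x z s1 s2] by simp
  then show "mapply (\<lambda>a b. poly (Aent x a b) z) (poly s1 z, poly s2 z) \<in> line_of (poly s1 z, poly s2 z)"
    unfolding line_of_def by auto
qed

lemma topco_mult: fixes p q :: "complex poly"
  assumes "polyle q n" "p \<noteq> 0"
  shows "topco (p * q) (int (degree p) + n) = lead_coeff p * topco q n"
proof (cases "n < 0")
  case True
  then have "q = 0" using polyle_neg assms(1) by blast
  then show ?thesis by (simp add: topco_def)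
next
  case False
  show ?thesis
  proof (cases "q = 0")
    case True then show ?thesis by (simp add: topco_def)
  next
    case q: False
    have dq: "degree q \<le> nat n" using assms(1) q False by (simp add: polyle_def)
    have e: "nat (int (degree p) + n) = degree p + nat n" using False by simp
    show ?thesis
    proof (cases "degree q = nat n")
      case True
      then show ?thesis using False e coeff_mult_degree_sum[of p q] by (simp add: topco_def)
    next
      case lt: False
      then have "coeff q (nat n) = 0" using dq by (simp add: coeff_eq_0)
      moreover have "coeff (p * q) (degree p + nat n) = 0"
        using degree_mult_le[of p q] dq lt by (intro coeff_eq_0) linarith
      ultimately show ?thesis using False e by (simp add: topco_def)
    qed
  qed
qed

lemma betaI_alt: "I \<subseteq> {1..4} \<Longrightarrow> betaI \<beta> I = 2 * sum \<beta> I - sum \<beta> {1..4}"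
  unfolding betaI_def by (subst sum_diff) (auto intro: finite_subset)

lemma card_lost: fixes g :: "complex poly"
  assumes "g \<noteq> 0" "z1 \<noteq> 0" "z1 \<noteq> 1"
  shows "card {i \<in> {1,2,3}. poly g (pt z1 i) = 0} \<le> degree g"
proof -
  let ?L = "{i \<in> {1,2,3}. poly g (pt z1 i) = 0}"
  have inj: "inj_on (pt z1) ?L" using pt_distinct[OF assms(2,3)] by (auto simp: inj_on_def)
  have "card ?L = card (pt z1 ` ?L)" using card_image[OF inj] by simp
  also have "\<dots> \<le> card {z. poly g z = 0}"
    using poly_roots_finite[OF assms(1)] by (intro card_mono) auto
  also have "\<dots> \<le> degree g" by (rule card_poly_roots_bound[OF assms(1)])
  finally show ?thesis .
qed

lemma saturate:
  fixes j :: int and s1 s2 :: "complex poly"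
  assumes x: "x \<in> QPH z1 m1 m2" and z: "z1 \<noteq> 0" "z1 \<noteq> 1"
  and \<beta>: "\<forall>i\<in>{1..4}. 0 \<le> \<beta> i \<and> \<beta> i \<le> 1"
  and I: "I \<subseteq> {1..4}"
  and s: "s1 \<noteq> 0 \<or> s2 \<noteq> 0"
  and p1: "polyle s1 j" and p2: "polyle s2 (j - (m1 - m2))"
  and A0: "Au x s1 s2 = (0,0)"
  and parf: "\<forall>i\<in>I. i \<noteq> 4 \<longrightarrow> par (poly s1 (pt z1 i), poly s2 (pt z1 i)) (Fv x i)"
  and par4: "4 \<in> I \<longrightarrow> par (topco s1 j, topco s2 (j - (m1 - m2))) (Fv x 4)"
  and bI: "betaI \<beta> I \<ge> real_of_int (2 * j - (m1 - m2))"
  shows "\<not> beta_stable z1 m1 m2 \<beta> x"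
proof
  assume st: "beta_stable z1 m1 m2 \<beta> x"
  define \<delta> where "\<delta> = m1 - m2"
  define g where "g = gcd s1 s2"
  have g0: "g \<noteq> 0" using s by (simp add: g_def)
  obtain s1' where s1': "s1 = g * s1'" unfolding g_def by (metis gcd_dvd1 dvdE)
  obtain s2' where s2': "s2 = g * s2'" unfolding g_def by (metis gcd_dvd2 dvdE)
  have "gcd s1 s2 = normalize (g * gcd s1' s2')" using gcd_mult_left[of g s1' s2'] s1' s2' by metis
  then have "g = normalize (g * gcd s1' s2')" by (simp only: g_def[symmetric])
  moreover have "normalize g = g" by (simp add: g_def)
  ultimately have "g * 1 = g * gcd s1' s2'" by (simp add: normalize_mult)
  then have gcd1: "gcd s1' s2' = 1" using g0 by (metis mult_left_cancel)
  have nz': "\<forall>z. \<not> (poly s1' z = 0 \<and> poly s2' z = 0)"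
  proof (intro allI notI)
    fix z assume "poly s1' z = 0 \<and> poly s2' z = 0"
    then have "[:-z, 1:] dvd s1'" "[:-z, 1:] dvd s2'" by (auto simp: poly_eq_0_iff_dvd)
    then have "[:-z, 1:] dvd gcd s1' s2'" by simp
    then have "is_unit [:-z, 1:]" using gcd1 by simp
    then show False by (simp add: is_unit_iff_degree)
  qed
  have sne: "s1' \<noteq> 0 \<or> s2' \<noteq> 0" using s s1' s2' by auto
  define dg where "dg = degree g"
  define j' where "j' = (if s1' = 0 then int (degree s2') + \<delta> else if s2' = 0 then int (degree s1')
                         else max (int (degree s1')) (int (degree s2') + \<delta>))"
  have F1: "polyle s1' j'" "polyle s2' (j' - \<delta>)" unfolding j'_def polyle_def by auto
  have F2: "topco s1' j' \<noteq> 0 \<or> topco s2' (j' - \<delta>) \<noteq> 0"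
  proof (cases "s1' = 0")
    case True
    then have "s2' \<noteq> 0" "j' - \<delta> = int (degree s2')" using sne by (auto simp: j'_def)
    then show ?thesis by (simp add: topco_def)
  next
    case n1: False
    show ?thesis
    proof (cases "s2' \<noteq> 0 \<and> int (degree s1') < int (degree s2') + \<delta>")
      case True
      then have "j' - \<delta> = int (degree s2')" using n1 by (auto simp: j'_def)
      then show ?thesis using True by (simp add: topco_def)
    next
      case False
      then have "j' = int (degree s1')" using n1 by (auto simp: j'_def)
      then show ?thesis using n1 by (simp add: topco_def)
    qed
  qed
  have F3: "j' + int dg \<le> j"
  proof -
    have a: "int dg + int (degree s1') \<le> j" if "s1' \<noteq> 0"
      using p1 that g0 unfolding s1' polyle_def dg_def by (auto simp: degree_mult_eq)
    have b: "int dg + int (degree s2') \<le> j - \<delta>" if "s2' \<noteq> 0"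
      using p2 that g0 unfolding s2' polyle_def dg_def \<delta>_def by (auto simp: degree_mult_eq)
    show ?thesis using a b sne unfolding j'_def by auto
  qed
  define k' where "k' = m1 - j'"
  have kk: "m1 - k' = j'" "m2 - k' = j' - \<delta>" by (auto simp: k'_def \<delta>_def)
  have lsub': "lsub m1 m2 k' s1' s2'" unfolding lsub_def kk using F1 F2 nz' by auto
  have "g * fst (Au x s1' s2') = fst (Au x s1 s2)" "g * snd (Au x s1' s2') = snd (Au x s1 s2)"
    unfolding s1' s2' Au_def by (simp_all add: algebra_simps)
  then have "Au x s1' s2' = (0,0)" using A0 g0 by (cases "Au x s1' s2'") auto
  then have inv': "Phi_inv x s1' s2'" by (rule Au_zero_inv)
  define I' where "I' = I_L z1 m1 m2 x k' s1' s2'"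
  have I'sub: "I' \<subseteq> {1..4}" by (auto simp: I'_def I_L_def)
  have stab: "betaI \<beta> I' < real_of_int (m1 + m2 - 2 * k')"
    using st lsub' inv' unfolding beta_stable_def I'_def by blast
  define t where "t = j - int dg - j'"
  define Lf where "Lf = {i \<in> {1,2,3}. poly g (pt z1 i) = 0}"
  have cLf: "card Lf \<le> dg" unfolding Lf_def dg_def by (rule card_lost[OF g0 z])
  have lost: "I - I' \<subseteq> Lf \<union> (if t = 0 then {} else {4})"
  proof
    fix i assume iI: "i \<in> I - I'"
    then have i14: "i \<in> {1..4}" using I by auto
    show "i \<in> Lf \<union> (if t = 0 then {} else {4})"
    proof (cases "i = 4")
      case True
      show ?thesis
      proof (cases "t = 0")
        case False then show ?thesis using True by simp
      next
        case t0: True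
        then have jj: "j = int (degree g) + j'" "j - (m1 - m2) = int (degree g) + (j' - \<delta>)"
          by (auto simp: t_def dg_def \<delta>_def)
        have "topco s1 j = lead_coeff g * topco s1' j'"
          unfolding jj(1) s1' by (rule topco_mult[OF F1(1) g0])
        moreover have "topco s2 (j - (m1 - m2)) = lead_coeff g * topco s2' (j' - \<delta>)"
          unfolding jj(2) s2' by (rule topco_mult[OF F1(2) g0])
        ultimately have "par (lead_coeff g * topco s1' j', lead_coeff g * topco s2' (j' - \<delta>)) (Fv x 4)"
          using par4 iI True by auto
        then have "par (topco s1' j', topco s2' (j' - \<delta>)) (Fv x 4)"
          by (rule par_unscale[rotated]) (simp add: g0)
        then have "line_of (topco s1' j', topco s2' (j' - \<delta>)) = line_of (Fv x 4)"
          using F2 QPH_F[OF x, of 4] by (intro par_line) auto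
        then have "i \<in> I'" using True by (simp add: I'_def I_L_def Lfib_def kk)
        then show ?thesis using iI by simp
      qed
    next
      case n4: False
      show ?thesis
      proof (cases "poly g (pt z1 i) = 0")
        case True then show ?thesis using i14 n4 by (auto simp: Lf_def)
      next
        case False
        have "par (poly g (pt z1 i) * poly s1' (pt z1 i), poly g (pt z1 i) * poly s2' (pt z1 i)) (Fv x i)"
          using parf iI n4 s1' s2' by simp
        then have "par (poly s1' (pt z1 i), poly s2' (pt z1 i)) (Fv x i)"
          by (rule par_unscale[rotated]) (simp add: False)
        then have "line_of (poly s1' (pt z1 i), poly s2' (pt z1 i)) = line_of (Fv x i)"
          using nz' QPH_F[OF x i14] by (intro par_line) auto
        then have "i \<in> I'" using n4 i14 by (simp add: I'_def I_L_def Lfib_def)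
        then show ?thesis using iI by simp
      qed
    qed
  qed
  have t0: "t \<ge> 0" using F3 by (simp add: t_def)
  have cardle: "real (card (I - I')) \<le> real dg + real_of_int t"
  proof -
    have fin: "finite (Lf \<union> (if t = 0 then {} else {4}))" by (auto simp: Lf_def)
    have "card (I - I') \<le> card (Lf \<union> (if t = 0 then {} else {4}))" by (rule card_mono[OF fin lost])
    also have "\<dots> \<le> card Lf + card (if t = 0 then {} else {4::nat})" by (rule card_Un_le)
    finally have "card (I - I') \<le> card Lf + (if t = 0 then 0 else 1)" by (simp split: if_splits)
    then show ?thesis using cLf t0 by (simp split: if_splits)
  qed
  have sumI: "sum \<beta> I - real (card (I - I')) \<le> sum \<beta> I'"
  proof -
    have fI: "finite I" using I by (auto intro: finite_subset)
    have "sum \<beta> I = sum \<beta> (I - I') + sum \<beta> (I \<inter> I')"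
      using fI by (metis Diff_Diff_Int Diff_subset sum.subset_diff Int_lower1 add.commute)
    moreover have "sum \<beta> (I - I') \<le> real (card (I - I'))"
      using sum_bounded_above[of "I - I'" \<beta> 1] \<beta> I by auto
    moreover have "sum \<beta> (I \<inter> I') \<le> sum \<beta> I'"
      using I'sub \<beta> by (intro sum_mono2) (auto intro: finite_subset)
    ultimately show ?thesis by linarith
  qed
  have "betaI \<beta> I' \<ge> betaI \<beta> I - 2 * real (card (I - I'))"
    using betaI_alt[OF I, of \<beta>] betaI_alt[OF I'sub, of \<beta>] sumI by linarith
  moreover have "real_of_int (m1 + m2 - 2 * k') = real_of_int (2 * j - (m1 - m2)) - 2 * (real dg + real_of_int t)"
    by (simp add: k'_def t_def \<delta>_def)
  ultimately show False using stab bI cardle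
    by (smt (verit) mult_left_mono)
qed



definition PA :: "qdat \<Rightarrow> nat \<Rightarrow> nat \<Rightarrow> complex \<Rightarrow> complex" where
  "PA y a b t = (\<Sum>n<10. coeff (Aent y a b) n * t ^ n)"

definition NN :: "nat \<Rightarrow> nat \<Rightarrow> nat" where "NN j D = Suc j + (Suc j - D)"
definition RR :: "nat \<Rightarrow> nat" where "RR j = (j + 3) + (j + 3) + 3 + 1"

definition ent :: "complex \<Rightarrow> nat \<Rightarrow> nat \<Rightarrow> nat set \<Rightarrow> nat \<Rightarrow> nat \<Rightarrow> qdat \<Rightarrow> complex" where
  "ent z1 D j I r b y =
    (if r < j + 3 then
       (if b < Suc j then PA y 1 1 (of_nat r) * of_nat r ^ b else PA y 1 2 (of_nat r) * of_nat r ^ (b - Suc j))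
     else if r < (j + 3) + (j + 3) then
       (if b < Suc j then PA y 2 1 (of_nat (r - (j+3))) * of_nat (r - (j+3)) ^ b
        else PA y 2 2 (of_nat (r - (j+3))) * of_nat (r - (j+3)) ^ (b - Suc j))
     else if r < (j + 3) + (j + 3) + 3 then
       (if Suc (r - ((j + 3) + (j + 3))) \<in> I then
          (if b < Suc j then snd (Fv y (Suc (r - ((j + 3) + (j + 3))))) * pt z1 (Suc (r - ((j + 3) + (j + 3)))) ^ b
           else - fst (Fv y (Suc (r - ((j + 3) + (j + 3))))) * pt z1 (Suc (r - ((j + 3) + (j + 3)))) ^ (b - Suc j))
        else 0)
     else if 4 \<in> I then
       (if b < Suc j then (if b = j then snd (Fv y 4) else 0)
        else (if b - Suc j = j - D then - fst (Fv y 4) else 0))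
     else 0)"

definition mkS1 :: "nat \<Rightarrow> (nat \<Rightarrow> complex) \<Rightarrow> complex poly" where
  "mkS1 j c = (\<Sum>p<Suc j. monom (c p) p)"
definition mkS2 :: "nat \<Rightarrow> nat \<Rightarrow> (nat \<Rightarrow> complex) \<Rightarrow> complex poly" where
  "mkS2 j D c = (\<Sum>p<Suc j - D. monom (c (Suc j + p)) p)"

lemma sum_split: "(\<Sum>b<a + (n::nat). f b) = (\<Sum>b<a. f b) + (\<Sum>p<n. f (a + p))"
  by (induction n) (simp_all add: add.assoc)

lemma all_split: "(\<forall>r<a + (n::nat). P r) \<longleftrightarrow> (\<forall>r<a. P r) \<and> (\<forall>p<n. P (a + p))"
proof (intro iffI conjI allI impI)
  fix r assume "\<forall>r<a + n. P r" "r < a" then show "P r" by auto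
next
  fix p assume "\<forall>r<a + n. P r" "p < n" then show "P (a + p)" by auto
next
  fix r assume h: "(\<forall>r<a. P r) \<and> (\<forall>p<n. P (a + p))" "r < a + n"
  show "P r"
  proof (cases "r < a")
    case False then have "r = a + (r - a)" "r - a < n" using h(2) by auto
    then show ?thesis using h(1) by metis
  qed (use h in auto)
qed

lemma poly_mkS1: "poly (mkS1 j c) t = (\<Sum>p<Suc j. c p * t ^ p)"
  by (simp add: mkS1_def poly_sum poly_monom)
lemma poly_mkS2: "poly (mkS2 j D c) t = (\<Sum>p<Suc j - D. c (Suc j + p) * t ^ p)"
  by (simp add: mkS2_def poly_sum poly_monom)
lemma coeff_mkS1: "coeff (mkS1 j c) n = (if n < Suc j then c n else 0)"
  by (simp add: mkS1_def coeff_sum coeff_monom)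
lemma coeff_mkS2: "coeff (mkS2 j D c) n = (if n < Suc j - D then c (Suc j + n) else 0)"
  by (simp add: mkS2_def coeff_sum coeff_monom)

lemma PA_poly: assumes "polyle (Aent y a b) 9" shows "PA y a b t = poly (Aent y a b) t"
proof -
  let ?p = "Aent y a b"
  have d: "degree ?p < 10" using assms by (auto simp: polyle_def)
  have "poly ?p t = (\<Sum>i\<le>degree ?p. coeff ?p i * t ^ i)" by (rule poly_altdef)
  also have "\<dots> = (\<Sum>i<10. coeff ?p i * t ^ i)"
    using d by (intro sum.mono_neutral_left) (auto simp: coeff_eq_0)
  finally show ?thesis by (simp add: PA_def)
qed

lemma row1: "r < j + 3 \<Longrightarrow> (\<Sum>b<NN j D. ent z1 D j I r b y * c b) =
   PA y 1 1 (of_nat r) * poly (mkS1 j c) (of_nat r) + PA y 1 2 (of_nat r) * poly (mkS2 j D c) (of_nat r)"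
  unfolding NN_def sum_split poly_mkS1 poly_mkS2
  by (simp add: ent_def sum_distrib_left mult_ac del: sum.lessThan_Suc)

lemma row2: "t < j + 3 \<Longrightarrow> (\<Sum>b<NN j D. ent z1 D j I ((j+3) + t) b y * c b) =
   PA y 2 1 (of_nat t) * poly (mkS1 j c) (of_nat t) + PA y 2 2 (of_nat t) * poly (mkS2 j D c) (of_nat t)"
  unfolding NN_def sum_split poly_mkS1 poly_mkS2
  by (simp add: ent_def sum_distrib_left mult_ac del: sum.lessThan_Suc)

lemma row3: "i' < 3 \<Longrightarrow> (\<Sum>b<NN j D. ent z1 D j I ((j+3) + (j+3) + i') b y * c b) =
   (if Suc i' \<in> I then snd (Fv y (Suc i')) * poly (mkS1 j c) (pt z1 (Suc i')) - fst (Fv y (Suc i')) * poly (mkS2 j D c) (pt z1 (Suc i')) else 0)"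
  unfolding NN_def sum_split poly_mkS1 poly_mkS2
  by (simp add: ent_def sum_distrib_left mult_ac sum_negf del: sum.lessThan_Suc)

lemma row4: "(\<Sum>b<NN j D. ent z1 D j I ((j+3) + (j+3) + 3) b y * c b) =
   (if 4 \<in> I then snd (Fv y 4) * topco (mkS1 j c) (int j) - fst (Fv y 4) * topco (mkS2 j D c) (int j - int D) else 0)"
proof (cases "4 \<in> I")
  case True
  have a: "(\<Sum>b<Suc j. ent z1 D j I ((j+3) + (j+3) + 3) b y * c b) = snd (Fv y 4) * c j"
    using True by (simp add: ent_def if_distrib sum.delta cong: if_cong)
  have b: "(\<Sum>p<Suc j - D. ent z1 D j I ((j+3) + (j+3) + 3) (Suc j + p) y * c (Suc j + p)) =
           (if D \<le> j then - fst (Fv y 4) * c (Suc j + (j - D)) else 0)"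
  proof -
    have "(\<Sum>p<Suc j - D. ent z1 D j I ((j+3) + (j+3) + 3) (Suc j + p) y * c (Suc j + p)) =
          (\<Sum>p<Suc j - D. if p = j - D then - fst (Fv y 4) * c (Suc j + p) else 0)"
      using True by (intro sum.cong refl) (simp add: ent_def)
    also have "\<dots> = (if D \<le> j then - fst (Fv y 4) * c (Suc j + (j - D)) else 0)"
      by (simp add: sum.delta) linarith
    finally show ?thesis .
  qed
  have t1: "topco (mkS1 j c) (int j) = c j" by (simp add: topco_def coeff_mkS1)
  have t2: "topco (mkS2 j D c) (int j - int D) = (if D \<le> j then c (Suc j + (j - D)) else 0)"
    by (auto simp: topco_def coeff_mkS2 nat_diff_distrib)
  show ?thesis unfolding NN_def sum_split a b t1 t2 using True by simp
qed (simp add: ent_def)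



lemma many_roots: fixes u :: "complex poly"
  assumes "u = 0 \<or> degree u \<le> n" "\<forall>r<Suc n. poly u (of_nat r) = 0" shows "u = 0"
proof (rule ccontr)
  assume u: "u \<noteq> 0"
  have inj: "inj_on (of_nat :: nat \<Rightarrow> complex) {..<Suc n}" by (auto simp: inj_on_def)
  have "of_nat ` {..<Suc n} \<subseteq> {z. poly u z = 0}" using assms(2) by auto
  then have "card (of_nat ` {..<Suc n} :: complex set) \<le> card {z. poly u z = 0}"
    using poly_roots_finite[OF u] by (intro card_mono) auto
  also have "\<dots> \<le> degree u" by (rule card_poly_roots_bound[OF u])
  finally show False using card_image[OF inj] assms(1) u by simp
qed

lemma polyle_mkS1: "polyle (mkS1 j c) (int j)"
proof -
  have "degree (mkS1 j c) \<le> j" by (rule degree_le) (simp add: coeff_mkS1)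
  then show ?thesis by (simp add: polyle_def)
qed

lemma polyle_mkS2: "polyle (mkS2 j D c) (int j - int D)"
proof (cases "D \<le> j")
  case True
  have "degree (mkS2 j D c) \<le> j - D" by (rule degree_le) (auto simp: coeff_mkS2)
  then have "int (degree (mkS2 j D c)) \<le> int j - int D" using True by arith
  then show ?thesis by (simp add: polyle_def)
next
  case False
  then have "mkS2 j D c = 0" by (simp add: mkS2_def)
  then show ?thesis by simp
qed

lemma all3: "(\<forall>i'<(3::nat). Q (Suc i')) \<longleftrightarrow> Q 1 \<and> Q 2 \<and> Q 3"
  by (auto simp: numeral_3_eq_3 less_Suc_eq numeral_2_eq_2)

lemma RR_split: "(\<forall>r<RR j. P r) \<longleftrightarrow> (\<forall>r<j+3. P r) \<and> (\<forall>t<j+3. P ((j+3)+t)) \<and>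
    (\<forall>i'<3. P ((j+3)+(j+3)+i')) \<and> P ((j+3)+(j+3)+3)"
  unfolding RR_def all_split by simp

lemma QPH_A9:
  assumes y: "y \<in> QPH z1 m1 m2" and md: "m1 - m2 = int D" "D \<le> 2"
  shows "polyle (Aent y a b) 9"
proof -
  have "polyle (qA11 y) 9" "polyle (qA22 y) 9" "polyle (qA12 y) 9" "polyle (qA21 y) 9"
    using QPH_deg[OF y] md by (auto elim: polyle_mono)
  then show ?thesis by (simp add: Aent_def)
qed

lemma rows_iff:
  assumes y: "y \<in> QPH z1 m1 m2" and md: "m1 - m2 = int D" "D \<le> 2"
  shows "(\<forall>r<RR j. (\<Sum>b<NN j D. ent z1 D j I r b y * c b) = 0) \<longleftrightarrow>
     (Au y (mkS1 j c) (mkS2 j D c) = (0,0) \<and>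
      (\<forall>i\<in>{1,2,3}. i \<in> I \<longrightarrow> par (poly (mkS1 j c) (pt z1 i), poly (mkS2 j D c) (pt z1 i)) (Fv y i)) \<and>
      (4 \<in> I \<longrightarrow> par (topco (mkS1 j c) (int j), topco (mkS2 j D c) (int j - int D)) (Fv y 4)))"
proof -
  let ?s1 = "mkS1 j c" and ?s2 = "mkS2 j D c"
  have PA: "PA y a b t = poly (Aent y a b) t" for a b t by (rule PA_poly[OF QPH_A9[OF y md]])
  have e: "m1 - m2 + 2 = int D + 2" "m2 - m1 + 2 = 2 - int D" using md by auto
  have degs: "polyle (qA11 y) 2" "polyle (qA22 y) 2" "polyle (qA12 y) (int D + 2)" "polyle (qA21 y) (2 - int D)"
    using QPH_deg[OF y, unfolded e] by auto
  have ps: "polyle ?s1 (int j)" "polyle ?s2 (int j - int D)" by (rule polyle_mkS1, rule polyle_mkS2)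
  have pu1: "polyle (fst (Au y ?s1 ?s2)) (int j + 2)" unfolding Au_def fst_conv
    by (rule polyle_add; rule polyle_mono[OF polyle_mult]) (use degs ps in auto)
  have pu2: "polyle (snd (Au y ?s1 ?s2)) (int j + 2)" unfolding Au_def snd_conv
    by (rule polyle_add; rule polyle_mono[OF polyle_mult]) (use degs ps in auto)
  have dg: "p = 0 \<or> degree p \<le> j + 2" if "polyle p (int j + 2)" for p
    using that by (auto simp: polyle_def)
  have mr: "u = 0 \<or> degree u \<le> j+2 \<Longrightarrow> (\<forall>r<j+3. poly u (of_nat r) = 0) \<Longrightarrow> u = 0" for u :: "complex poly"
    using many_roots[of u "j+2"] by (simp add: eval_nat_numeral)
  have b1: "(\<forall>r<j+3. (\<Sum>b<NN j D. ent z1 D j I r b y * c b) = 0) \<longleftrightarrow> fst (Au y ?s1 ?s2) = 0"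
  proof -
    have "(\<forall>r<j+3. (\<Sum>b<NN j D. ent z1 D j I r b y * c b) = 0) \<longleftrightarrow> (\<forall>r<j+3. poly (fst (Au y ?s1 ?s2)) (of_nat r) = 0)"
      by (simp add: row1 PA Au_def Aent_def)
    also have "\<dots> \<longleftrightarrow> fst (Au y ?s1 ?s2) = 0"
      using mr[OF dg[OF pu1]] by auto
    finally show ?thesis .
  qed
  have b2: "(\<forall>t<j+3. (\<Sum>b<NN j D. ent z1 D j I ((j+3)+t) b y * c b) = 0) \<longleftrightarrow> snd (Au y ?s1 ?s2) = 0"
  proof -
    have "(\<forall>t<j+3. (\<Sum>b<NN j D. ent z1 D j I ((j+3)+t) b y * c b) = 0) \<longleftrightarrow> (\<forall>r<j+3. poly (snd (Au y ?s1 ?s2)) (of_nat r) = 0)"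
      by (simp add: row2 PA Au_def Aent_def)
    also have "\<dots> \<longleftrightarrow> snd (Au y ?s1 ?s2) = 0"
      using mr[OF dg[OF pu2]] by auto
    finally show ?thesis .
  qed
  have b3: "(\<forall>i'<3. (\<Sum>b<NN j D. ent z1 D j I ((j+3)+(j+3)+i') b y * c b) = 0) \<longleftrightarrow>
      (\<forall>i\<in>{1,2,3}. i \<in> I \<longrightarrow> par (poly ?s1 (pt z1 i), poly ?s2 (pt z1 i)) (Fv y i))"
  proof -
    have "(\<forall>i'<3. (\<Sum>b<NN j D. ent z1 D j I ((j+3)+(j+3)+i') b y * c b) = 0) \<longleftrightarrow>
      (\<forall>i'<3. (if Suc i' \<in> I then snd (Fv y (Suc i')) * poly (mkS1 j c) (pt z1 (Suc i')) - fst (Fv y (Suc i')) * poly (mkS2 j D c) (pt z1 (Suc i')) else 0) = 0)"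
      by (metis (no_types, lifting) row3)
    also have "\<dots> \<longleftrightarrow> (\<forall>i\<in>{1,2,3}. i \<in> I \<longrightarrow> par (poly ?s1 (pt z1 i), poly ?s2 (pt z1 i)) (Fv y i))"
      using all3[of "\<lambda>i. (if i \<in> I then snd (Fv y i) * poly ?s1 (pt z1 i) - fst (Fv y i) * poly ?s2 (pt z1 i) else 0) = 0"]
      by (simp add: par_def)
    finally show ?thesis .
  qed
  have b4: "(\<Sum>b<NN j D. ent z1 D j I ((j+3)+(j+3)+3) b y * c b) = 0 \<longleftrightarrow>
      (4 \<in> I \<longrightarrow> par (topco ?s1 (int j), topco ?s2 (int j - int D)) (Fv y 4))"
    unfolding row4 by (simp add: par_def)
  show ?thesis unfolding RR_split b1 b2 b3 b4 by (cases "Au y ?s1 ?s2") auto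
qed

lemma c_of_s:
  fixes s1 s2 :: "complex poly"
  assumes p1: "polyle s1 (int j)" and p2: "polyle s2 (int j - int D)"
  defines "c \<equiv> (\<lambda>b. if b < Suc j then coeff s1 b else coeff s2 (b - Suc j))"
  shows "mkS1 j c = s1" "mkS2 j D c = s2"
proof -
  show "mkS1 j c = s1"
  proof (rule poly_eqI)
    fix n
    show "coeff (mkS1 j c) n = coeff s1 n"
      using p1 by (auto simp: coeff_mkS1 c_def polyle_def coeff_eq_0)
  qed
  show "mkS2 j D c = s2"
  proof (rule poly_eqI)
    fix n
    show "coeff (mkS2 j D c) n = coeff s2 n"
    proof (cases "n < Suc j - D")
      case True then show ?thesis by (simp add: coeff_mkS2 c_def)
    next
      case False
      have "coeff s2 n = 0"
      proof (cases "s2 = 0")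
        case False
        then have "int (degree s2) \<le> int j - int D" using p2 by (simp add: polyle_def)
        then show ?thesis using \<open>\<not> n < Suc j - D\<close> by (intro coeff_eq_0) linarith
      qed simp
      then show ?thesis using False by (simp add: coeff_mkS2)
    qed
  qed
qed

lemma c_of_s_nz:
  fixes s1 s2 :: "complex poly"
  assumes p1: "polyle s1 (int j)" and p2: "polyle s2 (int j - int D)" and s: "s1 \<noteq> 0 \<or> s2 \<noteq> 0"
  shows "\<exists>b<NN j D. (if b < Suc j then coeff s1 b else coeff s2 (b - Suc j)) \<noteq> 0"
proof (cases "s1 = 0")
  case False
  have "degree s1 < Suc j" using p1 False by (simp add: polyle_def)
  then show ?thesis using False by (intro exI[of _ "degree s1"]) (auto simp: NN_def)
next
  case True
  then have s2: "s2 \<noteq> 0" using s by simp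
  then have d: "int (degree s2) \<le> int j - int D" using p2 by (simp add: polyle_def)
  then have "Suc j + degree s2 < NN j D" by (simp add: NN_def)
  then show ?thesis using s2 by (intro exI[of _ "Suc j + degree s2"]) auto
qed

lemma nz_of_c: assumes "\<exists>b<NN j D. c b \<noteq> 0" shows "mkS1 j c \<noteq> 0 \<or> mkS2 j D c \<noteq> 0"
proof -
  obtain b where b: "b < NN j D" "c b \<noteq> 0" using assms by blast
  show ?thesis
  proof (cases "b < Suc j")
    case True
    then have "coeff (mkS1 j c) b \<noteq> 0" using b by (simp add: coeff_mkS1)
    then show ?thesis by auto
  next
    case False
    then have "b - Suc j < Suc j - D" "Suc j + (b - Suc j) = b" using b by (auto simp: NN_def)
    then have "coeff (mkS2 j D c) (b - Suc j) \<noteq> 0" using b by (simp add: coeff_mkS2)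
    then show ?thesis by auto
  qed
qed



lemma zif: "(\<lambda>y. f y) \<in> zpoly \<Longrightarrow> (\<lambda>y. g y) \<in> zpoly \<Longrightarrow> (\<lambda>y. if P then f y else g y) \<in> zpoly"
  by (cases P) auto

lemma zneg: "(\<lambda>y. f y) \<in> zpoly \<Longrightarrow> (\<lambda>y. - f y) \<in> zpoly"
proof -
  assume "(\<lambda>y. f y) \<in> zpoly"
  then have "(\<lambda>y. (-1) * f y) \<in> zpoly" by (rule zmul[OF zconst])
  then show ?thesis by simp
qed

lemma zPA: "(\<lambda>y. PA y a b t) \<in> zpoly"
  unfolding PA_def by (intro zpoly_sum zmul zconst zA) auto

lemma ent_zpoly: "(\<lambda>y. ent z1 D j I r b y) \<in> zpoly"
  unfolding ent_def by (intro zif zmul zneg zconst zPA zF1 zF2)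

lemma betaI_upper: assumes "I \<subseteq> {1..4}" "\<forall>i\<in>{1..4}. 0 \<le> \<beta> i" shows "betaI \<beta> I \<le> sum \<beta> {1..4}"
proof -
  have "sum \<beta> I \<le> sum \<beta> {1..4}" using assms by (intro sum_mono2) auto
  then show ?thesis using betaI_alt[OF assms(1), of \<beta>] by linarith
qed

lemma sum_lt4: fixes \<beta> :: "nat \<Rightarrow> real" assumes "\<forall>i\<in>{1..4}. \<beta> i < 1" shows "sum \<beta> {1..4::nat} < 4"
proof -
  have e: "{1..4::nat} = {1,2,3,4}" by auto
  have "\<beta> 1 < 1" "\<beta> 2 < 1" "\<beta> 3 < 1" "\<beta> 4 < 1" using assms by auto
  then show ?thesis unfolding e by simp
qed

lemma key_sep:
  assumes z: "z1 \<noteq> 0" "z1 \<noteq> 1" and md: "m1 - m2 = int D" "D \<le> 2"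
  and \<beta>: "\<forall>i\<in>{1..4}. 0 < \<beta> i \<and> \<beta> i < 1"
  and x: "x \<in> QPH z1 m1 m2" and st: "beta_stable z1 m1 m2 \<beta> x"
  shows "\<exists>F\<in>zpoly. F x \<noteq> 0 \<and> (\<forall>y\<in>QPH z1 m1 m2. \<not> beta_stable z1 m1 m2 \<beta> y \<longrightarrow> F y = 0)"
proof -
  define G where "G = {(j, I). j \<in> {0..2::nat} \<and> I \<subseteq> {1..4::nat} \<and> betaI \<beta> I \<ge> real_of_int (2 * int j - int D)}"
  have finG: "finite G"
  proof -
    have "G \<subseteq> {0..2} \<times> Pow {1..4}" by (auto simp: G_def)
    then show ?thesis by (rule finite_subset) auto
  qed
  have \<beta>1: "\<forall>i\<in>{1..4}. 0 \<le> \<beta> i \<and> \<beta> i \<le> 1" using \<beta> by force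
  have ex: "\<exists>f\<in>zpoly. f x \<noteq> 0 \<and> (\<forall>y c. (\<exists>b<NN j D. c b \<noteq> 0) \<and> (\<forall>r<RR j. (\<Sum>b<NN j D. ent z1 D j I r b y * c b) = 0) \<longrightarrow> f y = 0)"
    if jI: "(j, I) \<in> G" for j I
  proof (rule kernel_det)
    show "(\<lambda>y. ent z1 D j I r b y) \<in> zpoly" for r b by (rule ent_zpoly)
    fix c assume rows: "\<forall>r<RR j. (\<Sum>b<NN j D. ent z1 D j I r b x * c b) = 0"
    show "\<forall>b<NN j D. c b = 0"
    proof (rule ccontr)
      assume "\<not> (\<forall>b<NN j D. c b = 0)"
      then have nz: "mkS1 j c \<noteq> 0 \<or> mkS2 j D c \<noteq> 0" using nz_of_c by blast
      have I: "I \<subseteq> {1..4}" and bI: "betaI \<beta> I \<ge> real_of_int (2 * int j - int D)" using jI by (auto simp: G_def)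
      have R: "Au x (mkS1 j c) (mkS2 j D c) = (0,0)"
        "\<forall>i\<in>{1,2,3}. i \<in> I \<longrightarrow> par (poly (mkS1 j c) (pt z1 i), poly (mkS2 j D c) (pt z1 i)) (Fv x i)"
        "4 \<in> I \<longrightarrow> par (topco (mkS1 j c) (int j), topco (mkS2 j D c) (int j - int D)) (Fv x 4)"
        using rows rows_iff[OF x md, of j I c] by auto
      have e: "int j - (m1 - m2) = int j - int D" using md by simp
      have "\<not> beta_stable z1 m1 m2 \<beta> x"
      proof (rule saturate[OF x z \<beta>1 I nz])
        show "polyle (mkS1 j c) (int j)" by (rule polyle_mkS1)
        show "polyle (mkS2 j D c) (int j - (m1 - m2))" unfolding e by (rule polyle_mkS2)
        show "Au x (mkS1 j c) (mkS2 j D c) = (0,0)" by (rule R(1))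
        show "\<forall>i\<in>I. i \<noteq> 4 \<longrightarrow> par (poly (mkS1 j c) (pt z1 i), poly (mkS2 j D c) (pt z1 i)) (Fv x i)"
        proof (intro ballI impI)
          fix i assume i: "i \<in> I" "i \<noteq> 4"
          then have "i \<in> {1,2,3}" using I by auto
          then show "par (poly (mkS1 j c) (pt z1 i), poly (mkS2 j D c) (pt z1 i)) (Fv x i)" using R(2) i by blast
        qed
        show "4 \<in> I \<longrightarrow> par (topco (mkS1 j c) (int j), topco (mkS2 j D c) (int j - (m1 - m2))) (Fv x 4)"
          unfolding e by (rule R(3))
        show "real_of_int (2 * int j - (m1 - m2)) \<le> betaI \<beta> I" using bI md by simp
      qed
      then show False using st by simp
    qed
  qed
  have "\<forall>p\<in>G. \<exists>f. f \<in> zpoly \<and> f x \<noteq> 0 \<and> (\<forall>y c. (\<exists>b<NN (fst p) D. c b \<noteq> 0) \<and> (\<forall>r<RR (fst p). (\<Sum>b<NN (fst p) D. ent z1 D (fst p) (snd p) r b y * c b) = 0) \<longrightarrow> f y = 0)"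
  proof
    fix p assume p: "p \<in> G"
    obtain j I where jI: "p = (j, I)" by (cases p)
    from ex[of j I] p jI obtain f where "f \<in> zpoly" "f x \<noteq> 0"
      "\<forall>y c. (\<exists>b<NN j D. c b \<noteq> 0) \<and> (\<forall>r<RR j. (\<Sum>b<NN j D. ent z1 D j I r b y * c b) = 0) \<longrightarrow> f y = 0"
      by blast
    then show "\<exists>f. f \<in> zpoly \<and> f x \<noteq> 0 \<and> (\<forall>y c. (\<exists>b<NN (fst p) D. c b \<noteq> 0) \<and> (\<forall>r<RR (fst p). (\<Sum>b<NN (fst p) D. ent z1 D (fst p) (snd p) r b y * c b) = 0) \<longrightarrow> f y = 0)"
      using jI by auto
  qed
  from bchoice[OF this] obtain Fc where Fc: "\<forall>p\<in>G. Fc p \<in> zpoly \<and> Fc p x \<noteq> 0 \<and> (\<forall>y c. (\<exists>b<NN (fst p) D. c b \<noteq> 0) \<and> (\<forall>r<RR (fst p). (\<Sum>b<NN (fst p) D. ent z1 D (fst p) (snd p) r b y * c b) = 0) \<longrightarrow> Fc p y = 0)"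
    by blast
  define F where "F y = (\<Prod>p\<in>G. Fc p y)" for y
  have Fz: "F \<in> zpoly"
  proof -
    have "(\<lambda>y. \<Prod>p\<in>G. Fc p y) \<in> zpoly" using finG Fc by (intro zpoly_prod) auto
    then show ?thesis unfolding F_def[abs_def] .
  qed
  have Fx: "F x \<noteq> 0" unfolding F_def using finG Fc by (subst prod_zero_iff) auto
  have Fy: "F y = 0" if y: "y \<in> QPH z1 m1 m2" and ust: "\<not> beta_stable z1 m1 m2 \<beta> y" for y
  proof -
    obtain k s1 s2 where L: "lsub m1 m2 k s1 s2" and inv: "Phi_inv y s1 s2"
      and bad: "\<not> betaI \<beta> (I_L z1 m1 m2 y k s1 s2) < real_of_int (m1 + m2 - 2 * k)"
      using ust unfolding beta_stable_def by blast
    define I where "I = I_L z1 m1 m2 y k s1 s2"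
    have I: "I \<subseteq> {1..4}" by (auto simp: I_def I_L_def)
    have ps: "polyle s1 (m1 - k)" "polyle s2 (m2 - k)" and tc: "topco s1 (m1 - k) \<noteq> 0 \<or> topco s2 (m2 - k) \<noteq> 0"
      using L by (auto simp: lsub_def)
    have j0: "m1 - k \<ge> 0"
    proof (rule ccontr)
      assume "\<not> m1 - k \<ge> 0"
      then have "s1 = 0" "s2 = 0" using ps polyle_neg md by auto
      then have "topco s1 (m1 - k) = 0" "topco s2 (m2 - k) = 0" by (simp_all add: topco_def)
      then show False using tc by blast
    qed
    have b0: "\<forall>i\<in>{1..4}. 0 \<le> \<beta> i" and b1: "\<forall>i\<in>{1..4}. \<beta> i < 1" using \<beta> by auto
    have "betaI \<beta> I < 4" using betaI_upper[OF I b0] sum_lt4[OF b1] by linarith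
    then have j2: "m1 - k \<le> 2" using bad md unfolding I_def by linarith
    define j where "j = nat (m1 - k)"
    have jk: "m1 - k = int j" "m2 - k = int j - int D" using j0 md by (auto simp: j_def)
    have G: "(j, I) \<in> G" using j2 jk bad I md unfolding G_def I_def by auto
    have ps': "polyle s1 (int j)" "polyle s2 (int j - int D)" using ps jk by auto
    define c where "c = (\<lambda>b. if b < Suc j then coeff s1 b else coeff s2 (b - Suc j))"
    have cs: "mkS1 j c = s1" "mkS2 j D c = s2" using c_of_s[OF ps'] by (auto simp: c_def)
    have cnz: "\<exists>b<NN j D. c b \<noteq> 0"
    proof -
      have snz: "s1 \<noteq> 0 \<or> s2 \<noteq> 0" using lsub_nz[OF L, of 0] by auto
      show ?thesis using c_of_s_nz[OF ps' snz] by (simp add: c_def)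
    qed
    have A0: "Au y s1 s2 = (0,0)" by (rule phi_inv_zero[OF y z L inv])
    have pf: "\<forall>i\<in>{1,2,3}. i \<in> I \<longrightarrow> par (poly s1 (pt z1 i), poly s2 (pt z1 i)) (Fv y i)"
    proof (intro ballI impI)
      fix i assume "i \<in> {1,2,3}" "i \<in> I"
      then have "line_of (Lfib z1 m1 m2 k s1 s2 i) = line_of (Fv y i)" "i \<noteq> 4"
        by (auto simp: I_def I_L_def)
      then show "par (poly s1 (pt z1 i), poly s2 (pt z1 i)) (Fv y i)"
        using line_of_par by (simp add: Lfib_def)
    qed
    have p4: "4 \<in> I \<longrightarrow> par (topco s1 (int j), topco s2 (int j - int D)) (Fv y 4)"
    proof
      assume "4 \<in> I"
      then have "line_of (Lfib z1 m1 m2 k s1 s2 4) = line_of (Fv y 4)" by (auto simp: I_def I_L_def)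
      then show "par (topco s1 (int j), topco s2 (int j - int D)) (Fv y 4)"
        using line_of_par jk by (simp add: Lfib_def)
    qed
    have rows: "\<forall>r<RR j. (\<Sum>b<NN j D. ent z1 D j I r b y * c b) = 0"
      using rows_iff[OF y md, of j I c] A0 pf p4 cs by simp
    have "\<forall>y c. (\<exists>b<NN j D. c b \<noteq> 0) \<and> (\<forall>r<RR j. (\<Sum>b<NN j D. ent z1 D j I r b y * c b) = 0) \<longrightarrow> Fc (j, I) y = 0"
      using bspec[OF Fc G] by simp
    then have "Fc (j, I) y = 0" using cnz rows by blast
    then show ?thesis unfolding F_def using finG G by (subst prod_zero_iff) auto
  qed
  show ?thesis using Fz Fx Fy by blast
qed

lemma open_part:
  assumes z: "z1 \<noteq> 0" "z1 \<noteq> 1" and md: "m1 - m2 = int D" "D \<le> 2"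
  and \<beta>: "\<forall>i\<in>{1..4}. 0 < \<beta> i \<and> \<beta> i < 1"
  shows "zariski_open_in (QPH z1 m1 m2) (QPH_stable z1 m1 m2 \<beta>)"
  unfolding zariski_open_in_def
proof (intro conjI exI)
  show "QPH_stable z1 m1 m2 \<beta> \<subseteq> QPH z1 m1 m2" by (auto simp: QPH_stable_def)
  let ?Fs = "{f \<in> zpoly. \<forall>y\<in>QPH z1 m1 m2. \<not> beta_stable z1 m1 m2 \<beta> y \<longrightarrow> f y = 0}"
  show "?Fs \<subseteq> zpoly" by auto
  show "QPH z1 m1 m2 - QPH_stable z1 m1 m2 \<beta> = {x \<in> QPH z1 m1 m2. \<forall>f\<in>?Fs. f x = 0}"
  proof
    show "QPH z1 m1 m2 - QPH_stable z1 m1 m2 \<beta> \<subseteq> {x \<in> QPH z1 m1 m2. \<forall>f\<in>?Fs. f x = 0}"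
      by (auto simp: QPH_stable_def)
    show "{x \<in> QPH z1 m1 m2. \<forall>f\<in>?Fs. f x = 0} \<subseteq> QPH z1 m1 m2 - QPH_stable z1 m1 m2 \<beta>"
    proof
      fix x assume x: "x \<in> {x \<in> QPH z1 m1 m2. \<forall>f\<in>?Fs. f x = 0}"
      show "x \<in> QPH z1 m1 m2 - QPH_stable z1 m1 m2 \<beta>"
      proof (rule ccontr)
        assume "x \<notin> QPH z1 m1 m2 - QPH_stable z1 m1 m2 \<beta>"
        then have st: "beta_stable z1 m1 m2 \<beta> x" using x by (auto simp: QPH_stable_def)
        obtain F where "F \<in> zpoly" "F x \<noteq> 0" "\<forall>y\<in>QPH z1 m1 m2. \<not> beta_stable z1 m1 m2 \<beta> y \<longrightarrow> F y = 0"
          using key_sep[OF z md \<beta> _ st] x by blast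
        then show False using x by auto
      qed
    qed
  qed
qed



lemma Cstar_stable:
  assumes z: "z1 \<noteq> 0" "z1 \<noteq> 1" and x: "x \<in> QPH_Cstar z1 m1 m2"
  shows "beta_stable z1 m1 m2 \<beta> x"
  unfolding beta_stable_def
proof (intro allI impI)
  fix k s1 s2 assume h: "lsub m1 m2 k s1 s2 \<and> Phi_inv x s1 s2"
  have xq: "x \<in> QPH z1 m1 m2" and det: "qA11 x * qA22 x - qA12 x * qA21 x \<noteq> 0"
    using x by (auto simp: QPH_Cstar_def)
  have A0: "Au x s1 s2 = (0,0)" using phi_inv_zero[OF xq z] h by blast
  let ?d = "qA11 x * qA22 x - qA12 x * qA21 x"
  have "?d * s1 = qA22 x * fst (Au x s1 s2) - qA12 x * snd (Au x s1 s2)"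
    "?d * s2 = qA11 x * snd (Au x s1 s2) - qA21 x * fst (Au x s1 s2)"
    by (simp_all add: Au_def algebra_simps)
  then have "?d * s1 = 0" "?d * s2 = 0" using A0 by auto
  then have "s1 = 0" "s2 = 0" using det by auto
  then show "betaI \<beta> (I_L z1 m1 m2 x k s1 s2) < real_of_int (m1 + m2 - 2 * k)"
    using lsub_nz[of m1 m2 k s1 s2 0] h by simp
qed

lemma part2:
  assumes D: "4 \<le> m1 - m2" and \<beta>: "\<forall>i\<in>{1..4}. 0 \<le> \<beta> i \<and> \<beta> i < 1"
  shows "QPH_stable z1 m1 m2 \<beta> = {}"
proof (rule ccontr)
  assume "QPH_stable z1 m1 m2 \<beta> \<noteq> {}"
  then obtain x where x: "x \<in> QPH z1 m1 m2" and st: "beta_stable z1 m1 m2 \<beta> x"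
    by (auto simp: QPH_stable_def)
  have L: "lsub m1 m2 m1 1 0" by (simp add: lsub_def polyle_def topco_def)
  have A21: "qA21 x = 0" using QPH_deg(4)[OF x] D by (intro polyle_neg) auto
  have inv: "Phi_inv x 1 0"
    unfolding Phi_inv_def
  proof
    fix z
    have "mapply (\<lambda>a b. poly (Aent x a b) z) (poly 1 z, poly 0 z) = (poly (qA11 x) z * 1, poly (qA11 x) z * 0)"
      using A21 by (simp add: mapply_def Aent_def)
    then show "mapply (\<lambda>a b. poly (Aent x a b) z) (poly 1 z, poly 0 z) \<in> line_of (poly 1 z, poly 0 z)"
      unfolding line_of_def by auto
  qed
  define I where "I = I_L z1 m1 m2 x m1 1 0"
  have I: "I \<subseteq> {1..4}" by (auto simp: I_def I_L_def)
  have lt: "betaI \<beta> I < real_of_int (m1 + m2 - 2 * m1)" using st L inv unfolding beta_stable_def I_def by blast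
  have "sum \<beta> I \<ge> 0" using I \<beta> by (intro sum_nonneg) auto
  moreover have "sum \<beta> {1..4} < 4" using sum_lt4[of \<beta>] \<beta> by auto
  ultimately have "betaI \<beta> I > -4" using betaI_alt[OF I, of \<beta>] by linarith
  then show False using lt D by linarith
qed

lemma tri_upper: "M 1 1 = 0 \<Longrightarrow> M 2 2 = 0 \<Longrightarrow> M 2 1 = 0 \<Longrightarrow> nilpotent2 M \<and> (\<forall>w\<in>line_of (1,0). mapply M w = (0,0))"
  unfolding nilpotent2_def
  by (intro conjI exI[of _ 2]) (auto simp: numeral_2_eq_2 mmul_def mapply_def line_of_def)

lemma tri_lower: "M 1 1 = 0 \<Longrightarrow> M 2 2 = 0 \<Longrightarrow> M 1 2 = 0 \<Longrightarrow> nilpotent2 M \<and> (\<forall>w\<in>line_of (0,1). mapply M w = (0,0))"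
  unfolding nilpotent2_def
  by (intro conjI exI[of _ 2]) (auto simp: numeral_2_eq_2 mmul_def mapply_def line_of_def)

lemma QPH_I:
  assumes "\<forall>i\<in>{1..4}. Fv x i \<noteq> (0, 0)"
  "\<forall>a\<in>{1,2}. \<forall>b\<in>{1,2}. polyle (Aent x a b) (mdeg m1 m2 a - mdeg m1 m2 b + 2)"
  "nilpotent2 (resid z1 m1 m2 x 1) \<and> (\<forall>w\<in>line_of (Fv x 1). mapply (resid z1 m1 m2 x 1) w = (0, 0))"
  "nilpotent2 (resid z1 m1 m2 x 2) \<and> (\<forall>w\<in>line_of (Fv x 2). mapply (resid z1 m1 m2 x 2) w = (0, 0))"
  "nilpotent2 (resid z1 m1 m2 x 3) \<and> (\<forall>w\<in>line_of (Fv x 3). mapply (resid z1 m1 m2 x 3) w = (0, 0))"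
  "nilpotent2 (resid z1 m1 m2 x 4) \<and> (\<forall>w\<in>line_of (Fv x 4). mapply (resid z1 m1 m2 x 4) w = (0, 0))"
  shows "x \<in> QPH z1 m1 m2"
proof -
  have e: "{1..4::nat} = {1,2,3,4}" by auto
  show ?thesis using assms unfolding QPH_def e by auto
qed

definition cub :: "complex \<Rightarrow> complex poly" where "cub z1 = [:0, z1, -(1+z1), 1:]"
definition quad :: "complex \<Rightarrow> complex poly" where "quad z1 = [:-z1, 1+z1, -1:]"

lemma nonempty0:
  assumes z: "z1 \<noteq> 0" "z1 \<noteq> 1" and m: "m1 = m2"
  shows "QPH_Cstar z1 m1 m2 \<noteq> {}"
proof -
  define x where "x = \<lparr>qF1 = (1,0), qF2 = (0,1), qF3 = (1,0), qF4 = (0,1),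
     qA11 = 0, qA12 = [:0,1:], qA21 = quad z1, qA22 = 0\<rparr>"
  have q: "poly (quad z1) z1 = 0" "poly (quad z1) 1 = 0" by (simp_all add: quad_def algebra_simps)
  have dq: "degree (quad z1) = 2" by (simp add: quad_def)
  have P: "(pt z1 i - pt z1 q) \<noteq> 0" if "i \<in> {1,2,3}" "q \<in> {1,2,3}" "i \<noteq> q" for i q
    using pt_distinct[OF z that] by simp
  have "x \<in> QPH z1 m1 m2"
  proof (rule QPH_I)
    show "\<forall>i\<in>{1..4}. Fv x i \<noteq> (0, 0)" by (auto simp: x_def Fv_def)
    show "\<forall>a\<in>{1,2}. \<forall>b\<in>{1,2}. polyle (Aent x a b) (mdeg m1 m2 a - mdeg m1 m2 b + 2)"
      using dq by (auto simp: x_def Aent_def mdeg_def m polyle_def)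
    show "nilpotent2 (resid z1 m1 m2 x 1) \<and> (\<forall>w\<in>line_of (Fv x 1). mapply (resid z1 m1 m2 x 1) w = (0, 0))"
      using q by (simp add: x_def Fv_def) (rule tri_upper, simp_all add: resid_def Aent_def pt_def)
    show "nilpotent2 (resid z1 m1 m2 x 2) \<and> (\<forall>w\<in>line_of (Fv x 2). mapply (resid z1 m1 m2 x 2) w = (0, 0))"
      by (simp add: x_def Fv_def) (rule tri_lower, simp_all add: resid_def Aent_def pt_def)
    show "nilpotent2 (resid z1 m1 m2 x 3) \<and> (\<forall>w\<in>line_of (Fv x 3). mapply (resid z1 m1 m2 x 3) w = (0, 0))"
      using q by (simp add: x_def Fv_def) (rule tri_upper, simp_all add: resid_def Aent_def pt_def)
    show "nilpotent2 (resid z1 m1 m2 x 4) \<and> (\<forall>w\<in>line_of (Fv x 4). mapply (resid z1 m1 m2 x 4) w = (0, 0))"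
      by (simp add: x_def Fv_def) (rule tri_lower, simp_all add: resid_def Aent_def mdeg_def topco_def m eval_nat_numeral)
  qed
  moreover have "qA11 x * qA22 x - qA12 x * qA21 x \<noteq> 0"
    using dq by (auto simp: x_def)
  ultimately show ?thesis unfolding QPH_Cstar_def by blast
qed

lemma nonempty12:
  assumes z: "z1 \<noteq> 0" "z1 \<noteq> 1" and m: "m1 - m2 = 1 \<or> m1 - m2 = 2"
  shows "QPH_Cstar z1 m1 m2 \<noteq> {}"
proof -
  define f4 where "f4 = (if m1 - m2 = 1 then (1::complex,0::complex) else (0,1))"
  define x where "x = \<lparr>qF1 = (0,1), qF2 = (0,1), qF3 = (0,1), qF4 = f4,
     qA11 = 0, qA12 = cub z1, qA21 = [:-1:], qA22 = 0\<rparr>"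
  have q: "poly (cub z1) z1 = 0" "poly (cub z1) 1 = 0" "poly (cub z1) 0 = 0"
    by (simp_all add: cub_def algebra_simps power2_eq_square power3_eq_cube)
  have dq: "degree (cub z1) = 3" by (simp add: cub_def)
  have "x \<in> QPH z1 m1 m2"
  proof (rule QPH_I)
    show "\<forall>i\<in>{1..4}. Fv x i \<noteq> (0, 0)" by (auto simp: x_def Fv_def f4_def)
    show "\<forall>a\<in>{1,2}. \<forall>b\<in>{1,2}. polyle (Aent x a b) (mdeg m1 m2 a - mdeg m1 m2 b + 2)"
      using dq m by (auto simp: x_def Aent_def mdeg_def polyle_def)
    show "nilpotent2 (resid z1 m1 m2 x 1) \<and> (\<forall>w\<in>line_of (Fv x 1). mapply (resid z1 m1 m2 x 1) w = (0, 0))"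
      using q by (simp add: x_def Fv_def) (rule tri_lower, simp_all add: resid_def Aent_def pt_def)
    show "nilpotent2 (resid z1 m1 m2 x 2) \<and> (\<forall>w\<in>line_of (Fv x 2). mapply (resid z1 m1 m2 x 2) w = (0, 0))"
      using q by (simp add: x_def Fv_def) (rule tri_lower, simp_all add: resid_def Aent_def pt_def)
    show "nilpotent2 (resid z1 m1 m2 x 3) \<and> (\<forall>w\<in>line_of (Fv x 3). mapply (resid z1 m1 m2 x 3) w = (0, 0))"
      using q by (simp add: x_def Fv_def) (rule tri_lower, simp_all add: resid_def Aent_def pt_def)
    show "nilpotent2 (resid z1 m1 m2 x 4) \<and> (\<forall>w\<in>line_of (Fv x 4). mapply (resid z1 m1 m2 x 4) w = (0, 0))"
    proof (cases "m1 - m2 = 1")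
      case True
      have e: "m1 - m2 + 2 = 3" "m2 - m1 + 2 = 1" using True by auto
      show ?thesis using True
        by (simp add: x_def Fv_def f4_def) (rule tri_upper, simp_all add: resid_def Aent_def mdeg_def topco_def e cub_def eval_nat_numeral)
    next
      case False
      then have e: "m1 - m2 + 2 = 4" "m2 - m1 + 2 = 0" using m by auto
      show ?thesis using False
        by (simp add: x_def Fv_def f4_def) (rule tri_lower, simp_all add: resid_def Aent_def mdeg_def topco_def e cub_def eval_nat_numeral)
    qed
  qed
  moreover have "qA11 x * qA22 x - qA12 x * qA21 x \<noteq> 0"
    using dq by (auto simp: x_def)
  ultimately show ?thesis unfolding QPH_Cstar_def by blast
qed

theorem corollary6p1:
  fixes z1 :: complex and m1 m2 :: int
  assumes "z1 \<noteq> 0" and "z1 \<noteq> 1" and "m2 \<le> m1"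
  shows "(m1 - m2 \<le> 2 \<longrightarrow>
            (\<forall>\<beta>::nat \<Rightarrow> real. (\<forall>i\<in>{1..4}. 0 < \<beta> i \<and> \<beta> i < 1) \<longrightarrow>
               QPH_stable z1 m1 m2 \<beta> \<noteq> {} \<and>
               zariski_open_in (QPH z1 m1 m2) (QPH_stable z1 m1 m2 \<beta>) \<and>
               QPH_Cstar z1 m1 m2 \<subseteq> QPH_stable z1 m1 m2 \<beta>))
       \<and> (4 \<le> m1 - m2 \<longrightarrow>
            (\<forall>\<beta>::nat \<Rightarrow> real. (\<forall>i\<in>{1..4}. 0 \<le> \<beta> i \<and> \<beta> i < 1) \<longrightarrow>
               QPH_stable z1 m1 m2 \<beta> = {}))"
proof (intro conjI impI allI)
  fix \<beta> :: "nat \<Rightarrow> real"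
  assume m: "m1 - m2 \<le> 2" and \<beta>: "\<forall>i\<in>{1..4}. 0 < \<beta> i \<and> \<beta> i < 1"
  have sub: "QPH_Cstar z1 m1 m2 \<subseteq> QPH_stable z1 m1 m2 \<beta>"
    using Cstar_stable[OF assms(1,2)] by (auto simp: QPH_stable_def QPH_Cstar_def)
  show "QPH_Cstar z1 m1 m2 \<subseteq> QPH_stable z1 m1 m2 \<beta>" by (rule sub)
  have "QPH_Cstar z1 m1 m2 \<noteq> {}"
  proof (cases "m1 = m2")
    case True then show ?thesis by (rule nonempty0[OF assms(1,2)])
  next
    case False then show ?thesis using m assms(3) by (intro nonempty12[OF assms(1,2)]) auto
  qed
  then show "QPH_stable z1 m1 m2 \<beta> \<noteq> {}" using sub by blast
  define D where "D = nat (m1 - m2)"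
  have md: "m1 - m2 = int D" "D \<le> 2" using m assms(3) by (auto simp: D_def)
  show "zariski_open_in (QPH z1 m1 m2) (QPH_stable z1 m1 m2 \<beta>)" by (rule open_part[OF assms(1,2) md \<beta>])
next
  fix \<beta> :: "nat \<Rightarrow> real"
  assume "4 \<le> m1 - m2" "\<forall>i\<in>{1..4}. 0 \<le> \<beta> i \<and> \<beta> i < 1"
  then show "QPH_stable z1 m1 m2 \<beta> = {}" by (rule part2)
qed

end
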